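(* Consider an instance with $n$ agents, $m$ divisible items and binary additive valuations (notation as in the context), and let $x$ be a stable fractional allocation with profile $(h_1,\dots,h_n)$. If $d\neq d'$ are two values both attained by coordinates of the profile (i.e. $\mathsf{layer}^*_d$ and $\mathsf{layer}^*_{d'}$ are two different nonempty layers), then $|d-d'|\ge 1/n^2$.
   Context: Agents $[n]$, items $[m]$; each agent $i$ has a set $L_i\subseteq[m]$ of liked items. A fractional allocation is $x=(x_{o,i})$ with $x_{o,i}\ge0$, $\sum_i x_{o,i}\le1$ for each item $o$; clean if $x_{o,i}=0$ for $o\notin L_i$; max-USW if it maximizes $\sum_i\sum_{o\in L_i}x_{o,i}$; allocations are clean and max-USW; profile $h_i=\sum_o x_{o,i}$. A transfer $u\to v$: distinct agents $u=i_1,\dots,i_k=v$ ($k\ge2$), items $o_l$ with $x_{o_l,i_l}>0$, $o_l\in L_{i_{l+1}}$, amount $0<\Delta\le\min_l x_{o_l,i_l}$, moving $\Delta$ of $o_l$ from $i_l$ to $i_{l+1}$; narrowing if $h_u-\Delta\ge h_v+\Delta$; $x$ is stable if it admits no narrowing transfer. For real $d$, $\mathsf{layer}^*_d=\{i:h_i=d\}$. *)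

theory Defs
  imports Complex_Main
begin

text \<open>Agents are 0..<n, items are 0..<m. x t i is the fraction of item t given to agent i.
  L i is the set of items liked by agent i.\<close>

definition frac_alloc :: "nat \<Rightarrow> nat \<Rightarrow> (nat \<Rightarrow> nat \<Rightarrow> real) \<Rightarrow> bool" where
  "frac_alloc n m x \<longleftrightarrow>
     (\<forall>t<m. \<forall>i<n. 0 \<le> x t i) \<and> (\<forall>t<m. (\<Sum>i<n. x t i) \<le> 1)"

definition clean :: "nat \<Rightarrow> nat \<Rightarrow> (nat \<Rightarrow> nat set) \<Rightarrow> (nat \<Rightarrow> nat \<Rightarrow> real) \<Rightarrow> bool" where
  "clean n m L x \<longleftrightarrow> (\<forall>t<m. \<forall>i<n. t \<notin> L i \<longrightarrow> x t i = 0)"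

definition usw :: "nat \<Rightarrow> (nat \<Rightarrow> nat set) \<Rightarrow> (nat \<Rightarrow> nat \<Rightarrow> real) \<Rightarrow> real" where
  "usw n L x = (\<Sum>i<n. \<Sum>t\<in>L i. x t i)"

definition max_usw :: "nat \<Rightarrow> nat \<Rightarrow> (nat \<Rightarrow> nat set) \<Rightarrow> (nat \<Rightarrow> nat \<Rightarrow> real) \<Rightarrow> bool" where
  "max_usw n m L x \<longleftrightarrow> frac_alloc n m x \<and>
     (\<forall>y. frac_alloc n m y \<longrightarrow> usw n L y \<le> usw n L x)"

definition profile :: "nat \<Rightarrow> (nat \<Rightarrow> nat \<Rightarrow> real) \<Rightarrow> nat \<Rightarrow> real" where
  "profile m x i = (\<Sum>t<m. x t i)"

definition is_transfer :: "nat \<Rightarrow> nat \<Rightarrow> (nat \<Rightarrow> nat set) \<Rightarrow> (nat \<Rightarrow> nat \<Rightarrow> real)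
    \<Rightarrow> nat \<Rightarrow> (nat \<Rightarrow> nat) \<Rightarrow> (nat \<Rightarrow> nat) \<Rightarrow> real \<Rightarrow> bool" where
  "is_transfer n m L x k a b \<Delta> \<longleftrightarrow>
     2 \<le> k \<and> inj_on a {..<k} \<and> (\<forall>l<k. a l < n) \<and> 0 < \<Delta> \<and>
     (\<forall>l. l + 1 < k \<longrightarrow> b l < m \<and> 0 < x (b l) (a l) \<and> b l \<in> L (a (l + 1)) \<and> \<Delta> \<le> x (b l) (a l))"

definition narrowing_transfer :: "nat \<Rightarrow> nat \<Rightarrow> (nat \<Rightarrow> nat set) \<Rightarrow> (nat \<Rightarrow> nat \<Rightarrow> real)
    \<Rightarrow> nat \<Rightarrow> (nat \<Rightarrow> nat) \<Rightarrow> (nat \<Rightarrow> nat) \<Rightarrow> real \<Rightarrow> bool" where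
  "narrowing_transfer n m L x k a b \<Delta> \<longleftrightarrow>
     is_transfer n m L x k a b \<Delta> \<and>
     profile m x (a 0) - \<Delta> \<ge> profile m x (a (k - 1)) + \<Delta>"

definition stable :: "nat \<Rightarrow> nat \<Rightarrow> (nat \<Rightarrow> nat set) \<Rightarrow> (nat \<Rightarrow> nat \<Rightarrow> real) \<Rightarrow> bool" where
  "stable n m L x \<longleftrightarrow> \<not> (\<exists>k a b \<Delta>. narrowing_transfer n m L x k a b \<Delta>)"

definition layer :: "nat \<Rightarrow> nat \<Rightarrow> (nat \<Rightarrow> nat \<Rightarrow> real) \<Rightarrow> real \<Rightarrow> nat set" where
  "layer n m x d = {i. i < n \<and> profile m x i = d}"

end

theory Submission
  imports Defs
begin

lemma edge_le:
  assumes st: "stable n m L x" and i: "i < n" and j: "j < n" and t: "t < m"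
    and pos: "x t i > 0" and lk: "t \<in> L j"
  shows "profile m x i \<le> profile m x j"
proof (rule ccontr)
  assume "\<not> ?thesis"
  hence lt: "profile m x j < profile m x i" by simp
  hence ij: "i \<noteq> j" by auto
  define D where "D = min (x t i) ((profile m x i - profile m x j)/2)"
  define a where "a = (\<lambda>l::nat. if l = 0 then i else j)"
  have Dpos: "0 < D" using pos lt by (simp add: D_def)
  have inj: "inj_on a {..<2}"
    unfolding inj_on_def a_def using ij by (auto simp: lessThan_def)
  have "is_transfer n m L x 2 a (\<lambda>l. t) D"
    unfolding is_transfer_def
  proof (intro conjI allI impI)
    show "\<And>l. l < 2 \<Longrightarrow> a l < n" using i j by (auto simp: a_def)
    fix l :: nat assume "l + 1 < 2"
    hence l0: "l = 0" by simp
    show "t < m" by (rule t)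
    show "0 < x t (a l)" using pos l0 by (simp add: a_def)
    show "t \<in> L (a (l + 1))" using lk l0 by (simp add: a_def)
    show "D \<le> x t (a l)" using l0 by (simp add: a_def D_def)
  qed (use inj Dpos in auto)
  moreover have "profile m x (a 0) - D \<ge> profile m x (a (2 - 1)) + D"
    using lt by (auto simp: a_def D_def min_def field_simps)
  ultimately have "narrowing_transfer n m L x 2 a (\<lambda>l. t) D"
    by (simp add: narrowing_transfer_def)
  thus False using st by (auto simp: stable_def)
qed

lemma full:
  assumes Lsub: "\<forall>i<n. L i \<subseteq> {..<m}" and cl: "clean n m L x"
    and mu: "max_usw n m L x" and t: "t < m" and i: "i < n" and pos: "x t i > 0"
  shows "(\<Sum>j<n. x t j) = 1"
proof (rule ccontr)
  define s where "s = (\<Sum>j<n. x t j)"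
  assume "\<not> ?thesis"
  moreover have fa: "frac_alloc n m x" using mu by (simp add: max_usw_def)
  ultimately have slt: "s < 1" using t by (auto simp: frac_alloc_def s_def less_le)
  define e where "e = 1 - s"
  have epos: "e > 0" using slt by (simp add: e_def)
  define y where "y = (\<lambda>t' j. x t' j + (if t' = t \<and> j = i then e else 0))"
  have tL: "t \<in> L i" using cl pos t i unfolding clean_def by force
  have "frac_alloc n m y"
    unfolding frac_alloc_def
  proof (intro conjI allI impI)
    fix t' j assume "t' < m" "j < n"
    thus "0 \<le> y t' j" using fa epos by (auto simp: frac_alloc_def y_def)
  next
    fix t' assume tm: "t' < m"
    have "(\<Sum>j<n. y t' j) = (\<Sum>j<n. x t' j) + (\<Sum>j<n. (if t' = t \<and> j = i then e else 0))"
      by (simp add: y_def sum.distrib)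
    also have "\<dots> = (\<Sum>j<n. x t' j) + (if t' = t then e else 0)"
      using i by (cases "t' = t") auto
    finally show "(\<Sum>j<n. y t' j) \<le> 1"
      using fa tm by (cases "t' = t") (auto simp: frac_alloc_def e_def s_def)
  qed
  hence le: "usw n L y \<le> usw n L x" using mu by (simp add: max_usw_def)
  have "usw n L y = usw n L x + (\<Sum>j<n. \<Sum>t'\<in>L j. (if t' = t \<and> j = i then e else 0))"
    by (simp add: usw_def y_def sum.distrib)
  also have "(\<Sum>j<n. \<Sum>t'\<in>L j. (if t' = t \<and> j = i then e else 0)) = (\<Sum>j<n. if j = i then e else 0)"
  proof (rule sum.cong)
    fix j assume "j \<in> {..<n}"
    hence fin: "finite (L j)" using Lsub finite_subset by blast
    show "(\<Sum>t'\<in>L j. (if t' = t \<and> j = i then e else 0)) = (if j = i then e else 0)"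
      using fin tL by (cases "j = i") auto
  qed simp
  also have "\<dots> = e" using i by simp
  finally show False using le epos by simp
qed

lemma upset_sum:
  assumes Lsub: "\<forall>i<n. L i \<subseteq> {..<m}" and cl: "clean n m L x"
    and mu: "max_usw n m L x" and st: "stable n m L x"
    and U: "U \<subseteq> {..<n}"
    and up: "\<forall>i\<in>U. \<forall>j<n. j \<notin> U \<longrightarrow> profile m x j < profile m x i"
  shows "(\<Sum>i\<in>U. profile m x i) = real (card {t. t < m \<and> (\<exists>i\<in>U. x t i > 0)})"
proof -
  have fa: "frac_alloc n m x" using mu by (simp add: max_usw_def)
  have finU: "finite U" using U finite_subset by blast
  let ?T = "{t. t < m \<and> (\<exists>i\<in>U. x t i > 0)}"
  have "(\<Sum>i\<in>U. profile m x i) = (\<Sum>t<m. \<Sum>i\<in>U. x t i)"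
    unfolding profile_def by (rule sum.swap)
  also have "\<dots> = (\<Sum>t<m. if t \<in> ?T then 1 else 0)"
  proof (rule sum.cong)
    fix t assume "t \<in> {..<m}"
    hence tm: "t < m" by simp
    show "(\<Sum>i\<in>U. x t i) = (if t \<in> ?T then 1 else 0)"
    proof (cases "t \<in> ?T")
      case True
      then obtain i where iU: "i \<in> U" and xi: "x t i > 0" by auto
      have "(\<Sum>i\<in>U. x t i) = (\<Sum>i<n. x t i)"
      proof (rule sum.mono_neutral_left)
        show "\<forall>j\<in>{..<n} - U. x t j = 0"
        proof
          fix j assume jj: "j \<in> {..<n} - U"
          show "x t j = 0"
          proof (rule ccontr)
            assume "x t j \<noteq> 0"
            hence "t \<in> L j" using cl tm jj by (auto simp: clean_def)
            hence "profile m x i \<le> profile m x j"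
              using edge_le[OF st _ _ tm xi] iU U jj by auto
            moreover have "profile m x j < profile m x i" using up iU jj by auto
            ultimately show False by simp
          qed
        qed
      qed (use U in auto)
      also have "\<dots> = 1" using full[OF Lsub cl mu tm _ xi] iU U by auto
      finally show ?thesis using True by simp
    next
      case False
      have "\<forall>i\<in>U. x t i = 0"
      proof
        fix i assume iU: "i \<in> U"
        have "0 \<le> x t i" using fa tm iU U by (auto simp: frac_alloc_def)
        moreover have "\<not> x t i > 0" using False tm iU by auto
        ultimately show "x t i = 0" by simp
      qed
      thus ?thesis using False by simp
    qed
  qed simp
  also have "\<dots> = real (card ?T)"
    by (simp add: sum.If_cases Int_def)
  finally show ?thesis .
qed

lemma layer_int:
  assumes Lsub: "\<forall>i<n. L i \<subseteq> {..<m}" and cl: "clean n m L x"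
    and mu: "max_usw n m L x" and st: "stable n m L x"
  shows "\<exists>p::int. d * real (card (layer n m x d)) = of_int p"
proof -
  let ?h = "profile m x"
  define U1 where "U1 = {i. i < n \<and> ?h i \<ge> d}"
  define U2 where "U2 = {i. i < n \<and> ?h i > d}"
  have s1: "(\<Sum>i\<in>U1. ?h i) = real (card {t. t < m \<and> (\<exists>i\<in>U1. x t i > 0)})"
    by (rule upset_sum[OF Lsub cl mu st]) (auto simp: U1_def)
  have s2: "(\<Sum>i\<in>U2. ?h i) = real (card {t. t < m \<and> (\<exists>i\<in>U2. x t i > 0)})"
    by (rule upset_sum[OF Lsub cl mu st]) (auto simp: U2_def)
  have lay: "layer n m x d = U1 - U2" by (auto simp: layer_def U1_def U2_def)
  have fin: "finite U1" by (simp add: U1_def)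
  have sub: "U2 \<subseteq> U1" by (auto simp: U1_def U2_def)
  have "(\<Sum>i\<in>layer n m x d. ?h i) = (\<Sum>i\<in>U1. ?h i) - (\<Sum>i\<in>U2. ?h i)"
    unfolding lay by (rule sum_diff[OF fin sub])
  moreover have "(\<Sum>i\<in>layer n m x d. ?h i) = d * real (card (layer n m x d))"
    by (simp add: layer_def)
  ultimately have "d * real (card (layer n m x d)) =
     of_int (int (card {t. t < m \<and> (\<exists>i\<in>U1. x t i > 0)}) - int (card {t. t < m \<and> (\<exists>i\<in>U2. x t i > 0)}))"
    using s1 s2 by simp
  thus ?thesis by blast
qed

lemma arith_gap:
  fixes d d' :: real and p p' :: int and q q' n :: nat
  assumes "1 \<le> q" "q \<le> n" "1 \<le> q'" "q' \<le> n"
    and dq: "d * real q = of_int p" and dq': "d' * real q' = of_int p'" and ne: "d \<noteq> d'"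
  shows "\<bar>d - d'\<bar> \<ge> 1 / (real n)^2"
proof -
  define z where "z = p * int q' - p' * int q"
  have zr: "real_of_int z = (d - d') * (real q * real q')"
    using dq dq' by (simp add: z_def algebra_simps)
  have "z \<noteq> 0" using zr ne assms(1,3) by auto
  hence z1: "\<bar>real_of_int z\<bar> \<ge> 1" by linarith
  have qq: "real q * real q' \<le> (real n)^2"
    using assms(1-4) by (simp add: power2_eq_square mult_mono)
  have qpos: "real q * real q' > 0" using assms(1,3) by simp
  have "\<bar>d - d'\<bar> * (real q * real q') \<ge> 1" using z1 zr qpos by (simp add: abs_mult)
  hence "\<bar>d - d'\<bar> * (real n)^2 \<ge> 1"
    by (smt (verit) abs_ge_zero mult_left_mono qq)
  moreover have "(real n)^2 > 0" using assms(1,2) by simp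
  ultimately show ?thesis by (simp add: divide_le_eq mult.commute)
qed

theorem lemma8:
  fixes n m :: nat and L :: "nat \<Rightarrow> nat set" and x :: "nat \<Rightarrow> nat \<Rightarrow> real" and d d' :: real
  assumes "\<forall>i<n. L i \<subseteq> {..<m}"
    and "frac_alloc n m x"
    and "clean n m L x"
    and "max_usw n m L x"
    and "stable n m L x"
    and "layer n m x d \<noteq> {}"
    and "layer n m x d' \<noteq> {}"
    and "d \<noteq> d'"
  shows "\<bar>d - d'\<bar> \<ge> 1 / (real n)^2"
proof -
  obtain p where p: "d * real (card (layer n m x d)) = of_int p"
    using layer_int[OF assms(1,3,4,5)] by blast
  obtain p' where p': "d' * real (card (layer n m x d')) = of_int p'"
    using layer_int[OF assms(1,3,4,5)] by blast
  have sub: "\<And>e. layer n m x e \<subseteq> {..<n}" by (auto simp: layer_def)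
  have fin: "\<And>e. finite (layer n m x e)" using sub finite_subset by blast
  have c1: "1 \<le> card (layer n m x d)" using assms(6) fin[of d]
    by (simp add: Suc_le_eq card_gt_0_iff)
  have c2: "1 \<le> card (layer n m x d')" using assms(7) fin[of d']
    by (simp add: Suc_le_eq card_gt_0_iff)
  have c3: "card (layer n m x d) \<le> n" using card_mono[OF _ sub[of d]] by simp
  have c4: "card (layer n m x d') \<le> n" using card_mono[OF _ sub[of d']] by simp
  show ?thesis by (rule arith_gap[OF c1 c3 c2 c4 p p' assms(8)])
qed

end
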